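(* Let $K$ be an infinite field and $p=[p_1\exp_{\lambda^{(1)}},\dots,p_m\exp_{\lambda^{(m)}}]^T$ with $p_i\in A=K[t_1,\dots,t_n]$ and $\lambda^{(i)}\in(K\setminus\{0\})^n$. Partition $\{1,\dots,m\}=K_1\,\dot\cup\cdots\dot\cup\,K_l$ into classes of indices with equal exponent vector, $K_i=\{k_{i1}<\dots<k_{il_i}\}$, with common exponent $\mu^i:=\lambda^{(k_{i1})}$. Put $h_i=[p_{k_{i1}},\dots,p_{k_{il_i}}]^T\in A^{l_i}$, $H_i=\chi_{\mu^i}(\ker(\kappa_{h_i}))\subseteq\mathcal S_n^{1\times l_i}$ ($\chi_{\mu^i}$ applied entrywise), and $\phi_i:\mathcal S_n^{1\times l_i}\to\mathcal S_n^{1\times m}$, $[a_1,\dots,a_{l_i}]\mapsto\sum_ja_je_{k_{ij}}$. Then $$\{a\in\mathcal S_n^{1\times m}:\textstyle\sum_{j=1}^ma_j\bullet(p_j\exp_{\lambda^{(j)}})=0\}=\bigoplus_{i=1}^l\phi_i(H_i),$$ and a matrix whose rows generate this module is a kernel representation of the VMPUM of $\{p\}$.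
   Context: $\mathcal S_n=K[t_1,\dots,t_n][\Delta_1;\sigma_1,\delta_1]\cdots[\Delta_n;\sigma_n,\delta_n]$ is the $n$-th difference algebra, $\sigma_i(p)(t)=p(t+e_i)$, $\delta_i=\sigma_i-\mathrm{id}$ (so $\Delta_it_i=t_i\Delta_i+\Delta_i+1$, $\Delta_it_j=t_j\Delta_i$ for $i\neq j$, $\Delta_i$ commuting). It acts on $K^{\mathbb N_0^n}$ by $(\Delta_i\bullet f)(t)=f(t+e_i)-f(t)$ and multiplication by $t_i$; polynomials are identified with polynomial functions. $\exp_\lambda(t)=\lambda_1^{t_1}\cdots\lambda_n^{t_n}$. For $q\in A^k$, $\ker(\kappa_q)=\{a\in\mathcal S_n^{1\times k}:\sum_ia_i\bullet q_i=0\}$. For $\lambda\in(K\setminus\{0\})^n$, $\chi_\lambda$ is the $K$-algebra automorphism of $\mathcal S_n$ with $t_i\mapsto t_i$, $\Delta_i\mapsto\frac1{\lambda_i}(\Delta_i-\lambda_i+1)$. $e_k$ are canonical basis vectors of $\mathcal S_n^{1\times m}$. The VMPUM of a set of signals is the smallest solution set $\{g:R\bullet g=0\}$ ($R$ a matrix over $\mathcal S_n$) containing it. *)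

theory Defs
  imports Main "HOL-Library.Poly_Mapping"
begin

text \<open>
 Variables are indexed by a finite type 'n (so n = CARD('n)); exponent vectors
 and points of N_0^n are functions 'n => nat.

 Elements of S_n are represented in the normal form  sum c_(alpha,beta) t^alpha E^beta,
 where E_i = Delta_i + 1 is the shift (E_i p = sigma_i(p) E_i).  Since Delta_i = E_i - 1,
 this is the same algebra as K[t][Delta_1;sigma_1,delta_1]...[Delta_n;sigma_n,delta_n],
 only written in the basis t^alpha (Delta+1)^beta instead of t^alpha Delta^beta.
\<close>

type_synonym ('n, 'a) mpoly = "('n \<Rightarrow> nat) \<Rightarrow>\<^sub>0 'a"
type_synonym ('n, 'a) sop = "(('n \<Rightarrow> nat) \<times> ('n \<Rightarrow> nat)) \<Rightarrow>\<^sub>0 'a"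
type_synonym ('n, 'a) signal = "('n \<Rightarrow> nat) \<Rightarrow> 'a"

definition tpow :: "('n::finite \<Rightarrow> 'a::comm_ring_1) \<Rightarrow> ('n \<Rightarrow> nat) \<Rightarrow> 'a" where
  "tpow x \<alpha> = (\<Prod>i\<in>UNIV. x i ^ \<alpha> i)"

definition polyfun :: "('n::finite, 'a::comm_ring_1) mpoly \<Rightarrow> ('n, 'a) signal" where
  "polyfun p x = (\<Sum>\<alpha>\<in>Poly_Mapping.keys p. Poly_Mapping.lookup p \<alpha> * tpow (\<lambda>i. of_nat (x i)) \<alpha>)"

definition expfun :: "('n::finite \<Rightarrow> 'a::comm_ring_1) \<Rightarrow> ('n, 'a) signal" where
  "expfun lam x = tpow lam x"

text \<open>product of monomials: (c t^alpha E^beta)(t^gamma E^delta) = c t^alpha (t+beta)^gamma E^(beta+delta)\<close>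
definition mon_mult :: "'a::comm_ring_1 \<Rightarrow> ('n::finite \<Rightarrow> nat) \<times> ('n \<Rightarrow> nat)
    \<Rightarrow> ('n \<Rightarrow> nat) \<times> ('n \<Rightarrow> nat) \<Rightarrow> ('n, 'a) sop" where
  "mon_mult c m1 m2 = (case m1 of (\<alpha>, \<beta>) \<Rightarrow> case m2 of (\<gamma>, \<delta>) \<Rightarrow>
     (\<Sum>\<kappa>\<in>{\<kappa>. \<forall>i. \<kappa> i \<le> \<gamma> i}.
        Poly_Mapping.single (\<lambda>i. \<alpha> i + \<kappa> i, \<lambda>i. \<beta> i + \<delta> i)
          (c * (\<Prod>i\<in>UNIV. of_nat (\<gamma> i choose \<kappa> i) * of_nat (\<beta> i) ^ (\<gamma> i - \<kappa> i)))))"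

definition sop_mult :: "('n::finite, 'a::comm_ring_1) sop \<Rightarrow> ('n, 'a) sop \<Rightarrow> ('n, 'a) sop" where
  "sop_mult a b = (\<Sum>u\<in>Poly_Mapping.keys a. \<Sum>v\<in>Poly_Mapping.keys b. mon_mult (Poly_Mapping.lookup a u * Poly_Mapping.lookup b v) u v)"

definition sop_t :: "'n::finite \<Rightarrow> ('n, 'a::comm_ring_1) sop" where
  "sop_t i = Poly_Mapping.single (\<lambda>j. if j = i then 1 else 0, \<lambda>_. 0) 1"
definition sop_E :: "'n::finite \<Rightarrow> ('n, 'a::comm_ring_1) sop" where
  "sop_E i = Poly_Mapping.single (\<lambda>_. 0, \<lambda>j. if j = i then 1 else 0) 1"
definition sop_Delta :: "'n::finite \<Rightarrow> ('n, 'a::comm_ring_1) sop" where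
  "sop_Delta i = sop_E i - Poly_Mapping.single (\<lambda>_. 0, \<lambda>_. 0) 1"

definition sop_act :: "('n::finite, 'a::comm_ring_1) sop \<Rightarrow> ('n, 'a) signal \<Rightarrow> ('n, 'a) signal" where
  "sop_act a f = (\<lambda>x. \<Sum>u\<in>Poly_Mapping.keys a. Poly_Mapping.lookup a u * tpow (\<lambda>i. of_nat (x i)) (fst u)
                        * f (\<lambda>i. x i + snd u i))"

text \<open>chi_lambda: t_i -> t_i, Delta_i -> (Delta_i - lambda_i + 1)/lambda_i, i.e. E_i -> E_i/lambda_i\<close>
definition chi :: "('n::finite \<Rightarrow> 'a::field) \<Rightarrow> ('n, 'a) sop \<Rightarrow> ('n, 'a) sop" where
  "chi lam a = (\<Sum>u\<in>Poly_Mapping.keys a. Poly_Mapping.single u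
                    (Poly_Mapping.lookup a u * (\<Prod>i\<in>UNIV. inverse (lam i) ^ snd u i)))"

definition rowvecs :: "nat \<Rightarrow> (nat \<Rightarrow> ('n::finite, 'a::comm_ring_1) sop) set" where
  "rowvecs l = {a. \<forall>j. j \<notin> {1..l} \<longrightarrow> a j = 0}"

definition ker_kappa :: "nat \<Rightarrow> (nat \<Rightarrow> ('n::finite, 'a::comm_ring_1) signal)
     \<Rightarrow> (nat \<Rightarrow> ('n, 'a) sop) set" where
  "ker_kappa k q = {a \<in> rowvecs k. (\<lambda>x. \<Sum>j=1..k. sop_act (a j) (q j) x) = (\<lambda>x. 0)}"

definition chi_vec :: "('n::finite \<Rightarrow> 'a::field) \<Rightarrow> (nat \<Rightarrow> ('n, 'a) sop) \<Rightarrow> (nat \<Rightarrow> ('n, 'a) sop)" where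
  "chi_vec lam a = (\<lambda>j. chi lam (a j))"

definition index_classes :: "nat \<Rightarrow> (nat \<Rightarrow> 'b) \<Rightarrow> nat set set" where
  "index_classes m lam = {{k \<in> {1..m}. lam k = lam j} | j. j \<in> {1..m}}"

definition enum :: "nat set \<Rightarrow> nat \<Rightarrow> nat" where
  "enum C j = sorted_list_of_set C ! (j - 1)"

definition phi :: "nat set \<Rightarrow> (nat \<Rightarrow> ('n::finite, 'a::comm_ring_1) sop) \<Rightarrow> (nat \<Rightarrow> ('n, 'a) sop)" where
  "phi C a = (\<lambda>k. \<Sum>j\<in>{1..card C}. if enum C j = k then a j else 0)"

definition class_H :: "(nat \<Rightarrow> ('n::finite, 'a::field) mpoly) \<Rightarrow> (nat \<Rightarrow> 'n \<Rightarrow> 'a) \<Rightarrow> nat set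
     \<Rightarrow> (nat \<Rightarrow> ('n, 'a) sop) set" where
  "class_H p lam C = chi_vec (lam (enum C 1)) ` ker_kappa (card C) (\<lambda>j. polyfun (p (enum C j)))"

definition pvec :: "nat \<Rightarrow> (nat \<Rightarrow> ('n::finite, 'a::comm_ring_1) mpoly) \<Rightarrow> (nat \<Rightarrow> 'n \<Rightarrow> 'a)
     \<Rightarrow> nat \<Rightarrow> ('n, 'a) signal" where
  "pvec m p lam = (\<lambda>j. if j \<in> {1..m} then (\<lambda>x. polyfun (p j) x * expfun (lam j) x) else (\<lambda>x. 0))"

definition behav :: "nat \<Rightarrow> nat \<Rightarrow> (nat \<Rightarrow> nat \<Rightarrow> ('n::finite, 'a::comm_ring_1) sop)
     \<Rightarrow> (nat \<Rightarrow> ('n, 'a) signal) set" where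
  "behav g m R = {w. (\<forall>j. j \<notin> {1..m} \<longrightarrow> w j = (\<lambda>x. 0)) \<and>
      (\<forall>r\<in>{1..g}. (\<lambda>x. \<Sum>j=1..m. sop_act (R r j) (w j) x) = (\<lambda>x. 0))}"

definition row_module :: "nat \<Rightarrow> nat \<Rightarrow> (nat \<Rightarrow> nat \<Rightarrow> ('n::finite, 'a::comm_ring_1) sop)
     \<Rightarrow> (nat \<Rightarrow> ('n, 'a) sop) set" where
  "row_module g m R = {(\<lambda>j. if j \<in> {1..m} then (\<Sum>r=1..g. sop_mult (c r) (R r j)) else 0) | c. True}"

definition is_vmpum_kernel_rep :: "nat \<Rightarrow> nat \<Rightarrow> (nat \<Rightarrow> nat \<Rightarrow> ('n::finite, 'a::comm_ring_1) sop)
     \<Rightarrow> (nat \<Rightarrow> ('n, 'a) signal) \<Rightarrow> bool" where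
  "is_vmpum_kernel_rep g m R w \<longleftrightarrow> w \<in> behav g m R \<and>
     (\<forall>g' R'. w \<in> behav g' m R' \<longrightarrow> behav g m R \<subseteq> behav g' m R')"

end

theory Submission
  imports Defs "HOL-Library.FuncSet"
begin

definition Mon :: "('n::finite \<Rightarrow> nat) \<times> ('n \<Rightarrow> nat) \<Rightarrow> ('n, 'a::comm_ring_1) signal \<Rightarrow> ('n, 'a) signal" where
  "Mon u f = (\<lambda>x. tpow (\<lambda>i. of_nat (x i)) (fst u) * f (\<lambda>i. x i + snd u i))"

lemma sop_act_superset:
  assumes "finite S" "Poly_Mapping.keys a \<subseteq> S"
  shows "sop_act a f x = (\<Sum>u\<in>S. Poly_Mapping.lookup a u * Mon u f x)"
  unfolding sop_act_def Mon_def mult.assoc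
  by (rule sum.mono_neutral_left) (use assms in \<open>auto simp: in_keys_iff\<close>)

lemma sop_act_add: "sop_act (a + b) f x = sop_act a f x + sop_act b f x"
proof -
  let ?S = "Poly_Mapping.keys a \<union> Poly_Mapping.keys b"
  have f: "finite ?S" by simp
  have "sop_act (a + b) f x = (\<Sum>u\<in>?S. Poly_Mapping.lookup (a+b) u * Mon u f x)"
    by (rule sop_act_superset[OF f]) (rule keys_add)
  also have "\<dots> = (\<Sum>u\<in>?S. Poly_Mapping.lookup a u * Mon u f x) + (\<Sum>u\<in>?S. Poly_Mapping.lookup b u * Mon u f x)"
    unfolding lookup_add distrib_right sum.distrib ..
  also have "\<dots> = sop_act a f x + sop_act b f x"
    using sop_act_superset[OF f, of a f x] sop_act_superset[OF f, of b f x] by simp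
  finally show ?thesis .
qed

lemma sop_act_zero[simp]: "sop_act 0 f x = 0"
  by (simp add: sop_act_def)

lemma sop_act_sum: "sop_act (\<Sum>s\<in>A. a s) f x = (\<Sum>s\<in>A. sop_act (a s) f x)"
  by (induction A rule: infinite_finite_induct) (simp_all add: sop_act_add)

lemma sop_act_single: "sop_act (Poly_Mapping.single u c) f x = c * Mon u f x"
  by (subst sop_act_superset[of "{u}"]) auto

lemma sop_act_one: "sop_act (Poly_Mapping.single (\<lambda>_. 0, \<lambda>_. 0) 1) f x = f x"
  by (simp add: sop_act_single Mon_def tpow_def)

lemma sop_act_fsum: "sop_act a (\<lambda>y. \<Sum>j\<in>J. f j y) x = (\<Sum>j\<in>J. sop_act a (f j) x)"
  unfolding sop_act_def sum_distrib_left by (rule sum.swap)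

lemma sop_act_fzero: "sop_act a (\<lambda>y. 0) x = 0"
  unfolding sop_act_def by simp

lemma finite_kappa: "finite {\<kappa>::'n::finite \<Rightarrow> nat. \<forall>i. \<kappa> i \<le> \<gamma> i}"
proof -
  have "{\<kappa>::'n::finite \<Rightarrow> nat. \<forall>i. \<kappa> i \<le> \<gamma> i} = PiE UNIV (\<lambda>i. {..\<gamma> i})"
    by (auto simp: PiE_UNIV_domain)
  thus ?thesis by (simp add: finite_PiE)
qed

lemma tpow_add: "tpow x (\<lambda>i. a i + b i) = tpow x a * tpow x b"
  unfolding tpow_def by (simp add: power_add prod.distrib)


lemma tpow_shift_binom:
  "tpow (\<lambda>i. of_nat (x i + \<beta> i) :: 'a::comm_ring_1) \<gamma> =
   (\<Sum>\<kappa>\<in>{\<kappa>. \<forall>i. \<kappa> i \<le> \<gamma> i}. (\<Prod>i\<in>UNIV. of_nat (\<gamma> i choose \<kappa> i) * of_nat (\<beta> i) ^ (\<gamma> i - \<kappa> i)) * tpow (\<lambda>i. of_nat (x i)) \<kappa>)"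
proof -
  have "tpow (\<lambda>i. of_nat (x i + \<beta> i) :: 'a) \<gamma> = (\<Prod>i\<in>UNIV. \<Sum>k\<in>{..\<gamma> i}. of_nat (\<gamma> i choose k) * of_nat (\<beta> i) ^ (\<gamma> i - k) * of_nat (x i) ^ k)"
    unfolding tpow_def of_nat_add binomial_ring by (intro prod.cong sum.cong refl) (simp only: mult.assoc mult.commute[of "of_nat (x _) ^ _"])
  also have "\<dots> = (\<Sum>\<kappa>\<in>PiE UNIV (\<lambda>i. {..\<gamma> i}). \<Prod>i\<in>UNIV. of_nat (\<gamma> i choose \<kappa> i) * of_nat (\<beta> i) ^ (\<gamma> i - \<kappa> i) * of_nat (x i) ^ \<kappa> i)"
    by (rule prod_sum_PiE) auto
  also have "PiE UNIV (\<lambda>i. {..\<gamma> i}) = {\<kappa>. \<forall>i. \<kappa> i \<le> \<gamma> i}"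
    by (auto simp: PiE_UNIV_domain)
  finally show ?thesis unfolding tpow_def by (simp add: prod.distrib)
qed

lemma sop_act_mon_mult: "sop_act (mon_mult c u v) f x = c * Mon u (Mon v f) x"
proof -
  obtain \<alpha> \<beta> where u: "u = (\<alpha>, \<beta>)" by (cases u)
  obtain \<gamma> \<delta> where v: "v = (\<gamma>, \<delta>)" by (cases v)
  let ?K = "{\<kappa>. \<forall>i. \<kappa> i \<le> \<gamma> i}"
  have "sop_act (mon_mult c u v) f x = (\<Sum>\<kappa>\<in>?K. c * (\<Prod>i\<in>UNIV. of_nat (\<gamma> i choose \<kappa> i) * of_nat (\<beta> i) ^ (\<gamma> i - \<kappa> i))
      * (tpow (\<lambda>i. of_nat (x i)) \<alpha> * tpow (\<lambda>i. of_nat (x i)) \<kappa>) * f (\<lambda>i. x i + (\<beta> i + \<delta> i)))"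
    unfolding mon_mult_def u v by (simp add: sop_act_sum sop_act_single Mon_def tpow_add mult.assoc)
  also have "\<dots> = c * (tpow (\<lambda>i. of_nat (x i)) \<alpha> * (tpow (\<lambda>i. of_nat (x i + \<beta> i)) \<gamma> * f (\<lambda>i. x i + (\<beta> i + \<delta> i))))"
    unfolding tpow_shift_binom sum_distrib_left sum_distrib_right by (rule sum.cong) (simp_all only: mult_ac)
  finally show ?thesis unfolding u v Mon_def by (simp add: add.assoc)
qed


lemma Mon_lin: "Mon u (\<lambda>y. \<Sum>v\<in>V. c v * g v y) x = (\<Sum>v\<in>V. c v * Mon u (g v) x)"
  unfolding Mon_def sum_distrib_left by (simp add: mult_ac)

lemma sop_act_keys: "sop_act b f = (\<lambda>y. \<Sum>v\<in>Poly_Mapping.keys b. Poly_Mapping.lookup b v * Mon v f y)"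
  by (rule ext, rule sop_act_superset) auto

lemma sop_act_mult: "sop_act (sop_mult a b) f x = sop_act a (sop_act b f) x"
proof -
  have "sop_act (sop_mult a b) f x = (\<Sum>u\<in>Poly_Mapping.keys a. \<Sum>v\<in>Poly_Mapping.keys b.
      Poly_Mapping.lookup a u * (Poly_Mapping.lookup b v * Mon u (Mon v f) x))"
    unfolding sop_mult_def by (simp add: sop_act_sum sop_act_mon_mult mult.assoc)
  also have "\<dots> = (\<Sum>u\<in>Poly_Mapping.keys a. Poly_Mapping.lookup a u * Mon u (sop_act b f) x)"
    unfolding sop_act_keys[of b f] Mon_lin sum_distrib_left ..
  also have "\<dots> = sop_act a (sop_act b f) x"
    by (rule sop_act_superset[symmetric]) auto
  finally show ?thesis .
qed

definition wt :: "('n::finite \<Rightarrow> 'a::field) \<Rightarrow> ('n \<Rightarrow> nat) \<times> ('n \<Rightarrow> nat) \<Rightarrow> 'a" where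
  "wt lam u = (\<Prod>i\<in>UNIV. inverse (lam i) ^ snd u i)"

lemma lookup_chi: "Poly_Mapping.lookup (chi lam a) v = Poly_Mapping.lookup a v * wt lam v"
proof -
  have "Poly_Mapping.lookup (chi lam a) v = (\<Sum>u\<in>Poly_Mapping.keys a. if u = v then Poly_Mapping.lookup a u * wt lam u else 0)"
    unfolding chi_def lookup_sum wt_def by (intro sum.cong refl) (simp add: lookup_single when_def)
  also have "\<dots> = Poly_Mapping.lookup a v * wt lam v"
    by (simp add: in_keys_iff)
  finally show ?thesis .
qed

lemma wt_inv: "(\<forall>i. lam i \<noteq> 0) \<Longrightarrow> wt lam u * wt (\<lambda>i. inverse (lam i)) u = 1"
  unfolding wt_def by (simp add: prod.distrib[symmetric] power_mult_distrib[symmetric])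

lemma wt_inv': "(\<forall>i. lam i \<noteq> 0) \<Longrightarrow> wt (\<lambda>i. inverse (lam i)) u * wt lam u = 1"
  using wt_inv[of lam u] by (simp add: mult.commute)

lemma chi_chi: "(\<forall>i. lam i \<noteq> 0) \<Longrightarrow> chi lam (chi (\<lambda>i. inverse (lam i)) a) = a"
  by (rule poly_mapping_eqI) (simp add: lookup_chi mult.assoc wt_inv')

lemma chi_chi': "(\<forall>i. lam i \<noteq> 0) \<Longrightarrow> chi (\<lambda>i. inverse (lam i)) (chi lam a) = a"
  using chi_chi[of "\<lambda>i. inverse (lam i)" a] by simp

lemma expfun_shift: "expfun lam (\<lambda>i. x i + b i) = expfun lam x * (\<Prod>i\<in>UNIV. lam i ^ b i)"
  unfolding expfun_def tpow_def by (simp add: power_add prod.distrib)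

lemma sop_act_exp:
  fixes lam :: "'n::finite \<Rightarrow> 'a::field"
  assumes nz: "\<forall>i. lam i \<noteq> 0"
  shows "sop_act a (\<lambda>y. f y * expfun lam y) x = expfun lam x * sop_act (chi (\<lambda>i. inverse (lam i)) a) f x"
proof -
  have w: "\<And>u. wt (\<lambda>i. inverse (lam i)) u = (\<Prod>i\<in>UNIV. lam i ^ snd u i)"
    unfolding wt_def by simp
  have "sop_act a (\<lambda>y. f y * expfun lam y) x = (\<Sum>u\<in>Poly_Mapping.keys a.
      expfun lam x * (Poly_Mapping.lookup a u * wt (\<lambda>i. inverse (lam i)) u * Mon u f x))"
    unfolding sop_act_def Mon_def expfun_shift w by (intro sum.cong refl) (simp add: mult_ac)
  also have "\<dots> = expfun lam x * sop_act (chi (\<lambda>i. inverse (lam i)) a) f x"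
    unfolding sum_distrib_left[symmetric]
    by (subst sop_act_superset[of "Poly_Mapping.keys a"]) (auto simp: lookup_chi in_keys_iff)
  finally show ?thesis .
qed

definition Dl :: "'n \<Rightarrow> ('n, 'a::comm_ring_1) signal \<Rightarrow> ('n, 'a) signal" where
  "Dl i g = (\<lambda>x. g (x(i := Suc (x i))) - g x)"

definition Qset :: "('n::finite, 'a::comm_ring_1) signal set" where
  "Qset = {g. \<forall>i. \<exists>N. (Dl i ^^ N) g = (\<lambda>x. 0)}"

lemma Dl_apply: "Dl i g x = g (x(i := Suc (x i))) - g x"
  by (simp add: Dl_def)

lemma Dl_pow_Suc_apply: "(Dl i ^^ Suc N) g x = (Dl i ^^ N) g (x(i := Suc (x i))) - (Dl i ^^ N) g x"
  by (simp add: Dl_def)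

lemma Dl_pow_zero: "(Dl i ^^ N) (\<lambda>x. 0) = (\<lambda>x. 0)"
  by (induction N) (simp_all add: Dl_pow_Suc_apply fun_eq_iff del: funpow.simps)

lemma Dl_pow_add: "(Dl i ^^ N) (\<lambda>x. f x + g x) = (\<lambda>x. (Dl i ^^ N) f x + (Dl i ^^ N) g x)"
  by (induction N) (simp_all add: Dl_pow_Suc_apply fun_eq_iff algebra_simps del: funpow.simps)

lemma Dl_pow_scale: "(Dl i ^^ N) (\<lambda>x. c * f x) = (\<lambda>x. c * (Dl i ^^ N) f x)"
  by (induction N) (simp_all add: Dl_pow_Suc_apply fun_eq_iff algebra_simps del: funpow.simps)

lemma Dl_pow_mono: "(Dl i ^^ N) g = (\<lambda>x. 0) \<Longrightarrow> N \<le> M \<Longrightarrow> (Dl i ^^ M) g = (\<lambda>x. 0)"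
proof -
  assume a: "(Dl i ^^ N) g = (\<lambda>x. 0)" "N \<le> M"
  have "(Dl i ^^ M) g = (Dl i ^^ (M - N)) ((Dl i ^^ N) g)"
    using a(2) by (metis comp_apply funpow_add le_add_diff_inverse2)
  thus ?thesis using a(1) by (simp add: Dl_pow_zero)
qed

lemma Q_zero: "(\<lambda>x. 0) \<in> Qset"
  unfolding Qset_def by (auto intro: exI[of _ 0])

lemma Q_const: "(\<lambda>x. c) \<in> Qset"
  unfolding Qset_def by (auto intro!: exI[of _ 1] simp: Dl_def)

lemma Q_add: "f \<in> Qset \<Longrightarrow> g \<in> Qset \<Longrightarrow> (\<lambda>x. f x + g x) \<in> Qset"
proof -
  assume f: "f \<in> Qset" and g: "g \<in> Qset"
  show ?thesis unfolding Qset_def mem_Collect_eq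
  proof (rule allI)
    fix i
    obtain N1 where N1: "(Dl i ^^ N1) f = (\<lambda>x. 0)" using f unfolding Qset_def by blast
    obtain N2 where N2: "(Dl i ^^ N2) g = (\<lambda>x. 0)" using g unfolding Qset_def by blast
    have "(Dl i ^^ max N1 N2) f = (\<lambda>x. 0)" "(Dl i ^^ max N1 N2) g = (\<lambda>x. 0)"
      using Dl_pow_mono[OF N1] Dl_pow_mono[OF N2] by auto
    thus "\<exists>N. (Dl i ^^ N) (\<lambda>x. f x + g x) = (\<lambda>x. 0)"
      by (intro exI[of _ "max N1 N2"]) (simp add: Dl_pow_add)
  qed
qed

lemma Q_scale: "f \<in> Qset \<Longrightarrow> (\<lambda>x. c * f x) \<in> Qset"
  unfolding Qset_def by (auto simp: Dl_pow_scale) (metis mult_zero_right)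

lemma Q_sum: "(\<And>s. s \<in> A \<Longrightarrow> F s \<in> Qset) \<Longrightarrow> (\<lambda>x. \<Sum>s\<in>A. F s x) \<in> Qset"
proof (induction A rule: infinite_finite_induct)
  case (infinite A) thus ?case by (simp add: Q_zero)
next
  case empty thus ?case by (simp add: Q_zero)
next
  case (insert a A) thus ?case by (simp add: Q_add)
qed

lemma Dl_pow_shift: "(Dl i ^^ N) (\<lambda>x. f (\<lambda>j. x j + b j)) = (\<lambda>x. (Dl i ^^ N) f (\<lambda>j. x j + b j))"
proof (induction N)
  case 0 thus ?case by simp
next
  case (Suc N)
  have e: "\<And>x. (\<lambda>j. (if j = i then Suc (x i) else x j) + b j) = (\<lambda>j. x j + b j)(i := Suc (x i + b i))"
    by (rule ext) auto
  show ?case by (simp add: Dl_pow_Suc_apply Suc e fun_eq_iff del: funpow.simps)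
qed

lemma Q_shift: "f \<in> Qset \<Longrightarrow> (\<lambda>x. f (\<lambda>j. x j + b j)) \<in> Qset"
  unfolding Qset_def by (auto simp: Dl_pow_shift) (metis)

lemma upd_shift: "x(i := Suc (x i)) = (\<lambda>j. x j + (if j = i then 1 else 0))"
  by (rule ext) auto

lemma Q_upd: "f \<in> Qset \<Longrightarrow> (\<lambda>x. f (x(i := Suc (x i)))) \<in> Qset"
  unfolding upd_shift by (rule Q_shift)

lemma Dl_pow_mulx_other: "i \<noteq> j \<Longrightarrow>
  (Dl i ^^ N) (\<lambda>x. of_nat (x j) * f x) = (\<lambda>x. of_nat (x j) * (Dl i ^^ N) f x)"
  by (induction N) (simp_all add: Dl_pow_Suc_apply fun_eq_iff algebra_simps del: funpow.simps)

lemma Dl_pow_mulx_same: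
  "(Dl i ^^ Suc k) (\<lambda>x. of_nat (x i) * f x) =
   (\<lambda>x. of_nat (x i) * (Dl i ^^ Suc k) f x + of_nat (Suc k) * (Dl i ^^ k) f (x(i := Suc (x i))))"
proof (induction k)
  case 0 show ?case by (simp add: Dl_apply fun_eq_iff algebra_simps fun_upd_def)
next
  case (Suc k)
  have "(Dl i ^^ Suc (Suc k)) (\<lambda>x. of_nat (x i) * f x) = Dl i ((Dl i ^^ Suc k) (\<lambda>x. of_nat (x i) * f x))"
    by simp
  also have "\<dots> = (\<lambda>x. of_nat (x i) * (Dl i ^^ Suc (Suc k)) f x + of_nat (Suc (Suc k)) * (Dl i ^^ Suc k) f (x(i := Suc (x i))))"
    unfolding Suc by (rule ext) (simp add: Dl_apply algebra_simps)
  finally show ?case .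
qed

lemma Q_mulx: assumes "f \<in> Qset" shows "(\<lambda>x. of_nat (x j) * f x) \<in> Qset"
  unfolding Qset_def mem_Collect_eq
proof (rule allI)
  fix i
  from assms have "\<forall>i. \<exists>N. (Dl i ^^ N) f = (\<lambda>x. 0)" unfolding Qset_def by simp
  then obtain N where N: "(Dl i ^^ N) f = (\<lambda>x. 0)" by blast
  show "\<exists>N. (Dl i ^^ N) (\<lambda>x. of_nat (x j) * f x) = (\<lambda>x. 0)"
  proof (cases "i = j")
    case True
    thus ?thesis using Dl_pow_mulx_same[where i=i and k=N and f=f] N
      by (intro exI[of _ "Suc N"]) (simp add: Dl_apply)
  next
    case False
    thus ?thesis using Dl_pow_mulx_other[OF False, where N=N and f=f] N by (intro exI[of _ N]) simp
  qed
qed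

lemma Q_powx: "f \<in> Qset \<Longrightarrow> (\<lambda>x. of_nat (x j) ^ k * f x) \<in> Qset"
proof (induction k)
  case 0 thus ?case by simp
next
  case (Suc k)
  from Q_mulx[OF Suc.IH[OF Suc.prems], of j] show ?case by (simp add: mult.assoc)
qed

lemma Q_prodx: "finite S \<Longrightarrow> f \<in> Qset \<Longrightarrow> (\<lambda>x. (\<Prod>i\<in>S. of_nat (x i) ^ \<alpha> i) * f x) \<in> Qset"
proof (induction S rule: finite_induct)
  case empty thus ?case by simp
next
  case (insert j S)
  from Q_powx[OF insert.IH[OF insert.prems], of j "\<alpha> j"] insert.hyps show ?case by (simp add: mult.assoc)
qed

lemma Q_tpow: "f \<in> Qset \<Longrightarrow> (\<lambda>x. tpow (\<lambda>i. of_nat (x i)) \<alpha> * (f x :: 'a::comm_ring_1)) \<in> Qset"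
  unfolding tpow_def by (rule Q_prodx) auto

lemma Q_polyfun: "polyfun q \<in> Qset"
proof -
  have "(\<lambda>x. \<Sum>\<alpha>\<in>Poly_Mapping.keys q. Poly_Mapping.lookup q \<alpha> * (tpow (\<lambda>i. of_nat (x i)) \<alpha> * 1)) \<in> Qset"
    by (intro Q_sum Q_scale Q_tpow Q_const)
  thus ?thesis unfolding polyfun_def[abs_def] by simp
qed

lemma Q_sop_act: "f \<in> Qset \<Longrightarrow> sop_act b f \<in> Qset"
  unfolding sop_act_keys Mon_def by (intro Q_sum Q_scale Q_tpow Q_shift)

definition Sop :: "'a::comm_ring_1 \<Rightarrow> 'a \<Rightarrow> 'n \<Rightarrow> ('n, 'a) signal \<Rightarrow> ('n, 'a) signal" where
  "Sop a b i g = (\<lambda>x. a * g (x(i := Suc (x i))) - b * g x)"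

lemma Sop_pow_Suc_apply: "(Sop a b i ^^ Suc N) g x = a * (Sop a b i ^^ N) g (x(i := Suc (x i))) - b * (Sop a b i ^^ N) g x"
  by (simp add: Sop_def)

lemma expfun_upd: "expfun lam (x(i := Suc (x i))) = lam i * expfun lam (x :: 'n::finite \<Rightarrow> nat)"
proof -
  have "(\<Prod>j\<in>UNIV. lam j ^ (if j = i then 1 else 0)) = (\<Prod>j\<in>UNIV. if j = i then lam j else 1)"
    by (rule prod.cong) auto
  also have "\<dots> = lam i" by simp
  finally show ?thesis unfolding upd_shift expfun_shift by (simp add: mult.commute)
qed

lemma expfun_nz: "\<forall>j. lam j \<noteq> (0::'a::field) \<Longrightarrow> expfun lam (x :: 'n::finite \<Rightarrow> nat) \<noteq> 0"
  unfolding expfun_def tpow_def by simp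

lemma Sop_exp: "(Sop 1 \<nu> i ^^ N) (\<lambda>x. expfun \<mu> x * g x) = (\<lambda>x. expfun \<mu> x * (Sop (\<mu> i) \<nu> i ^^ N) g x)"
proof (induction N)
  case 0 thus ?case by simp
next
  case (Suc N)
  show ?case by (rule ext) (simp only: Sop_pow_Suc_apply Suc, simp add: expfun_upd algebra_simps)
qed

lemma Sop_sum: "(Sop a b i ^^ N) (\<lambda>x. \<Sum>c\<in>I. F c x) = (\<lambda>x. \<Sum>c\<in>I. (Sop a b i ^^ N) (F c) x)"
proof (induction N)
  case 0 thus ?case by simp
next
  case (Suc N)
  show ?case by (rule ext) (simp add: Sop_pow_Suc_apply Suc sum_distrib_left sum_subtractf del: funpow.simps)
qed

lemma Sop_zero: "(Sop a b i ^^ N) (\<lambda>x. 0) = (\<lambda>x. 0)"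
  using Sop_sum[where a=a and b=b and i=i and N=N and F="\<lambda>_ _. 0" and I="{}"] by simp

lemma Sop_nil: "(Sop \<nu> \<nu> i ^^ N) g = (\<lambda>x. \<nu> ^ N * (Dl i ^^ N) g x)"
proof (induction N)
  case 0 thus ?case by simp
next
  case (Suc N)
  show ?case by (rule ext) (simp add: Sop_pow_Suc_apply Dl_pow_Suc_apply Suc algebra_simps del: funpow.simps)
qed

lemma Q_Sop1: "g \<in> Qset \<Longrightarrow> Sop a b i g \<in> Qset"
proof -
  assume g: "g \<in> Qset"
  have "Sop a b i g = (\<lambda>x. a * g (x(i := Suc (x i))) + (- b) * g x)"
    by (simp add: Sop_def)
  show ?thesis unfolding \<open>Sop a b i g = _\<close> by (intro Q_add Q_scale Q_upd g)
qed

lemma Q_Sop: "g \<in> Qset \<Longrightarrow> (Sop a b i ^^ N) g \<in> Qset"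
  by (induction N) (simp_all add: Q_Sop1)

lemma Sop_inj:
  fixes g :: "('n::finite, 'a::field) signal"
  assumes g: "g \<in> Qset" and ab: "a \<noteq> b" "a \<noteq> 0" and z: "Sop a b i g = (\<lambda>x. 0)"
  shows "g = (\<lambda>x. 0)"
proof -
  define \<rho> where "\<rho> = b / a"
  have r: "\<rho> - 1 \<noteq> 0" using ab unfolding \<rho>_def by (simp add: field_simps)
  have sh: "\<And>x. g (x(i := Suc (x i))) = \<rho> * g x"
  proof -
    fix x
    have "a * g (x(i := Suc (x i))) - b * g x = 0" using fun_cong[OF z, of x] by (simp add: Sop_def)
    thus "g (x(i := Suc (x i))) = \<rho> * g x" using ab unfolding \<rho>_def by (simp add: field_simps)
  qed
  have D1: "Dl i g = (\<lambda>x. (\<rho> - 1) * g x)"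
    by (rule ext) (simp add: Dl_apply sh algebra_simps)
  have Dk: "(Dl i ^^ k) g = (\<lambda>x. (\<rho> - 1) ^ k * g x)" for k
  proof (induction k)
    case 0 thus ?case by simp
  next
    case (Suc k)
    have "(Dl i ^^ Suc k) g = (Dl i ^^ k) (Dl i g)" by (simp add: funpow_Suc_right del: funpow.simps)
    also have "\<dots> = (\<lambda>x. (\<rho> - 1) ^ Suc k * g x)"
      unfolding D1 Dl_pow_scale Suc by (simp add: mult.assoc)
    finally show ?case .
  qed
  obtain N where N: "(Dl i ^^ N) g = (\<lambda>x. 0)" using g unfolding Qset_def by blast
  show ?thesis
  proof (rule ext)
    fix x
    have "(\<rho> - 1) ^ N * g x = 0" using fun_cong[OF N, of x] unfolding Dk by simp
    thus "g x = 0" using r by simp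
  qed
qed

lemma Sop_pow_inj:
  fixes g :: "('n::finite, 'a::field) signal"
  assumes "g \<in> Qset" "a \<noteq> b" "a \<noteq> 0" "(Sop a b i ^^ N) g = (\<lambda>x. 0)"
  shows "g = (\<lambda>x. 0)"
  using assms
proof (induction N arbitrary: g)
  case 0 thus ?case by simp
next
  case (Suc N)
  have "(Sop a b i ^^ N) (Sop a b i g) = (\<lambda>x. 0)"
    using Suc.prems(4) by (simp add: funpow_Suc_right del: funpow.simps)
  hence "Sop a b i g = (\<lambda>x. 0)" using Suc.IH[of "Sop a b i g"] Suc.prems Q_Sop1 by blast
  thus ?case using Sop_inj Suc.prems by blast
qed

lemma indep:
  fixes g :: "'c \<Rightarrow> ('n::finite, 'a::field) signal"
  assumes "finite I" "\<forall>c\<in>I. g c \<in> Qset" "\<forall>c\<in>I. \<forall>j. \<mu> c j \<noteq> 0" "inj_on \<mu> I"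
    "\<forall>x. (\<Sum>c\<in>I. expfun (\<mu> c) x * g c x) = 0" "c0 \<in> I"
  shows "g c0 = (\<lambda>x. 0)"
  using assms
proof (induction "card I" arbitrary: I g c0 rule: less_induct)
  case less
  show ?case
  proof (cases "I = {c0}")
    case True
    show ?thesis
    proof (rule ext)
      fix x
      have "expfun (\<mu> c0) x * g c0 x = 0" using less.prems(5) True by simp
      thus "g c0 x = 0" using expfun_nz[of "\<mu> c0" x] less.prems(3,6) by simp
    qed
  next
    case False
    then obtain c1 where c1: "c1 \<in> I" "c1 \<noteq> c0" using less.prems(6) by blast
    have "\<mu> c0 \<noteq> \<mu> c1" using less.prems(4,6) c1 by (metis inj_on_eq_iff)
    then obtain i where i: "\<mu> c0 i \<noteq> \<mu> c1 i" by blast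
    obtain N where N: "(Dl i ^^ N) (g c1) = (\<lambda>x. 0)" using less.prems(2) c1 unfolding Qset_def by blast
    define \<nu> where "\<nu> = \<mu> c1 i"
    define g' where "g' c = (Sop (\<mu> c i) \<nu> i ^^ N) (g c)" for c
    have "(Sop 1 \<nu> i ^^ N) (\<lambda>x. \<Sum>c\<in>I. expfun (\<mu> c) x * g c x) = (Sop 1 \<nu> i ^^ N) (\<lambda>x. 0)"
      using less.prems(5) by simp
    hence eq: "\<forall>x. (\<Sum>c\<in>I. expfun (\<mu> c) x * g' c x) = 0"
      unfolding Sop_sum Sop_exp Sop_zero g'_def by (simp add: fun_eq_iff)
    have g'1: "g' c1 = (\<lambda>x. 0)"
      unfolding g'_def \<nu>_def Sop_nil N by simp
    have eq2: "\<forall>x. (\<Sum>c\<in>I - {c1}. expfun (\<mu> c) x * g' c x) = 0"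
      using eq sum.remove[OF less.prems(1) c1(1), of "\<lambda>c. expfun (\<mu> c) _ * g' c _"] g'1 by simp
    have "g' c0 = (\<lambda>x. 0)"
    proof (rule less.hyps[of "I - {c1}" g' c0])
      show "card (I - {c1}) < card I" using card_Diff1_less[OF less.prems(1) c1(1)] .
      show "finite (I - {c1})" using less.prems(1) by simp
      show "\<forall>c\<in>I - {c1}. g' c \<in> Qset" using less.prems(2) unfolding g'_def by (simp add: Q_Sop)
      show "\<forall>c\<in>I - {c1}. \<forall>j. \<mu> c j \<noteq> 0" using less.prems(3) by simp
      show "inj_on \<mu> (I - {c1})" using less.prems(4) by (rule inj_on_subset) auto
      show "\<forall>x. (\<Sum>c\<in>I - {c1}. expfun (\<mu> c) x * g' c x) = 0" by (rule eq2)
      show "c0 \<in> I - {c1}" using less.prems(6) c1 by simp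
    qed
    thus ?thesis
      using Sop_pow_inj[where g="g c0" and a="\<mu> c0 i" and b=\<nu> and i=i and N=N] less.prems(2,3,6) i unfolding g'_def \<nu>_def by blast
  qed
qed

lemma bij_minus1: "bij_betw (\<lambda>j. j - 1) {1..n} {..<(n::nat)}"
  unfolding bij_betw_def
proof
  show "inj_on (\<lambda>j. j - 1) {1..n}" by (rule inj_onI) auto
  show "(\<lambda>j. j - 1) ` {1..n} = {..<n}"
  proof
    show "(\<lambda>j. j - 1) ` {1..n} \<subseteq> {..<n}" by auto
    show "{..<n} \<subseteq> (\<lambda>j. j - 1) ` {1..n}"
    proof
      fix x assume "x \<in> {..<n}"
      hence "Suc x \<in> {1..n}" by auto
      thus "x \<in> (\<lambda>j. j - 1) ` {1..n}" by (rule rev_image_eqI) simp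
    qed
  qed
qed

lemma enum_bij: "finite C \<Longrightarrow> bij_betw (enum C) {1..card C} C"
proof -
  assume fC: "finite C"
  let ?xs = "sorted_list_of_set C"
  have "bij_betw ((!) ?xs) {..<length ?xs} (set ?xs)"
    by (rule bij_betw_nth) auto
  hence b: "bij_betw ((!) ?xs) {..<card C} C" using fC by simp
  have "bij_betw ((!) ?xs \<circ> (\<lambda>j. j - 1)) {1..card C} C"
    by (rule bij_betw_trans[OF bij_minus1 b])
  moreover have "(!) ?xs \<circ> (\<lambda>j. j - 1) = enum C" by (rule ext) (simp add: enum_def)
  ultimately show ?thesis by simp
qed

lemma enum_in: "finite C \<Longrightarrow> j \<in> {1..card C} \<Longrightarrow> enum C j \<in> C"
proof -
  assume fC: "finite C" and j: "j \<in> {1..card C}"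
  show ?thesis by (rule bspec[OF bij_betwE[OF enum_bij[OF fC]] j])
qed

lemma enum_1: "finite C \<Longrightarrow> C \<noteq> {} \<Longrightarrow> enum C 1 \<in> C"
proof -
  assume fC: "finite C" and ne: "C \<noteq> {}"
  have "card C > 0" using fC ne by (simp add: card_gt_0_iff)
  hence "1 \<in> {1..card C}" by simp
  thus ?thesis by (rule enum_in[OF fC])
qed

lemma enum_surj: "finite C \<Longrightarrow> k \<in> C \<Longrightarrow> \<exists>j\<in>{1..card C}. enum C j = k"
proof -
  assume fC: "finite C" and k: "k \<in> C"
  have "k \<in> enum C ` {1..card C}" using bij_betw_imp_surj_on[OF enum_bij[OF fC]] k by simp
  thus ?thesis by blast
qed

lemma phi_enum: "finite C \<Longrightarrow> j \<in> {1..card C} \<Longrightarrow> phi C a (enum C j) = a j"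
proof -
  assume fC: "finite C" and j: "j \<in> {1..card C}"
  have inj: "inj_on (enum C) {1..card C}" using enum_bij[OF fC] bij_betw_def by blast
  have "phi C a (enum C j) = (\<Sum>j'\<in>{1..card C}. if j' = j then a j' else 0)"
    unfolding phi_def
  proof (rule sum.cong[OF refl])
    fix j' assume j': "j' \<in> {1..card C}"
    have "enum C j' = enum C j \<longleftrightarrow> j' = j" using inj_on_eq_iff[OF inj j' j] .
    thus "(if enum C j' = enum C j then a j' else 0) = (if j' = j then a j' else 0)" by simp
  qed
  also have "\<dots> = a j" using j by simp
  finally show ?thesis .
qed

lemma phi_out: "finite C \<Longrightarrow> k \<notin> C \<Longrightarrow> phi C a k = 0"
proof -
  assume fC: "finite C" and k: "k \<notin> C"
  show ?thesis unfolding phi_def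
  proof (rule sum.neutral, rule ballI)
    fix j assume "j \<in> {1..card C}"
    hence "enum C j \<in> C" by (rule enum_in[OF fC])
    thus "(if enum C j = k then a j else 0) = 0" using k by auto
  qed
qed

lemma cls_image: "index_classes m lam = (\<lambda>j. {k \<in> {1..m}. lam k = lam j}) ` {1..m}"
  unfolding index_classes_def by (rule Setcompr_eq_image)

lemma cls_finite: "finite (index_classes m lam)"
  unfolding cls_image by simp

lemma cls_sub: "C \<in> index_classes m lam \<Longrightarrow> C \<subseteq> {1..m}"
  unfolding index_classes_def by auto

lemma cls_fin: "C \<in> index_classes m lam \<Longrightarrow> finite C"
  by (rule finite_subset[OF cls_sub]) simp_all

lemma cls_ne: "C \<in> index_classes m lam \<Longrightarrow> C \<noteq> {}"
  unfolding index_classes_def by auto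

lemma cls_eq: "C \<in> index_classes m lam \<Longrightarrow> k \<in> C \<Longrightarrow> C = {k' \<in> {1..m}. lam k' = lam k}"
  unfolding index_classes_def by auto

lemma cls_lam: "C \<in> index_classes m lam \<Longrightarrow> k \<in> C \<Longrightarrow> lam k = lam (enum C 1)"
proof -
  assume C: "C \<in> index_classes m lam" and k: "k \<in> C"
  have "enum C 1 \<in> C" by (rule enum_1[OF cls_fin[OF C] cls_ne[OF C]])
  hence "enum C 1 \<in> {k' \<in> {1..m}. lam k' = lam k}" using cls_eq[OF C k] by simp
  thus ?thesis by simp
qed

lemma cls_disj: "C \<in> index_classes m lam \<Longrightarrow> C' \<in> index_classes m lam \<Longrightarrow> k \<in> C \<Longrightarrow> k \<in> C' \<Longrightarrow> C = C'"
proof -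
  assume C: "C \<in> index_classes m lam" and C': "C' \<in> index_classes m lam" and k: "k \<in> C" "k \<in> C'"
  show ?thesis using cls_eq[OF C k(1)] cls_eq[OF C' k(2)] by simp
qed

lemma cls_mem: "k \<in> {1..m} \<Longrightarrow> {k' \<in> {1..m}. lam k' = lam k} \<in> index_classes m lam"
  unfolding cls_image by (erule rev_image_eqI) (rule refl)

lemma cls_cover: "k \<in> {1..m} \<Longrightarrow> \<exists>C\<in>index_classes m lam. k \<in> C"
proof -
  assume k: "k \<in> {1..m}"
  show ?thesis by (rule bexI[OF _ cls_mem[OF k]]) (use k in simp)
qed

lemma cls_inj: "inj_on (\<lambda>C. lam (enum C 1)) (index_classes m lam)"
proof (rule inj_onI)
  fix C C' assume C: "C \<in> index_classes m lam" and C': "C' \<in> index_classes m lam"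
    and e: "lam (enum C 1) = lam (enum C' 1)"
  have "C = {k' \<in> {1..m}. lam k' = lam (enum C 1)}" using cls_eq[OF C enum_1[OF cls_fin[OF C] cls_ne[OF C]]] .
  moreover have "C' = {k' \<in> {1..m}. lam k' = lam (enum C' 1)}" using cls_eq[OF C' enum_1[OF cls_fin[OF C'] cls_ne[OF C']]] .
  ultimately show "C = C'" using e by simp
qed

lemma cls_union: "\<Union>(index_classes m lam) = {1..m}"
proof
  show "\<Union>(index_classes m lam) \<subseteq> {1..m}"
  proof
    fix k assume "k \<in> \<Union>(index_classes m lam)"
    then obtain C where "C \<in> index_classes m lam" "k \<in> C" by blast
    thus "k \<in> {1..m}" using cls_sub by blast
  qed
  show "{1..m} \<subseteq> \<Union>(index_classes m lam)"
  proof
    fix k assume "k \<in> {1..m}"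
    then obtain C where "C \<in> index_classes m lam" "k \<in> C" using cls_cover by blast
    thus "k \<in> \<Union>(index_classes m lam)" by blast
  qed
qed

lemma sum_cls: "(\<Sum>k\<in>{1..m}. F k) = (\<Sum>C\<in>index_classes m lam. \<Sum>k\<in>C. F k)"
proof -
  have "(\<Sum>k\<in>\<Union>(index_classes m lam). F k) = (\<Sum>C\<in>index_classes m lam. \<Sum>k\<in>C. F k)"
  proof -
    have h1: "\<forall>A\<in>index_classes m lam. finite A" using cls_fin by blast
    have h2: "\<forall>A\<in>index_classes m lam. \<forall>B\<in>index_classes m lam. A \<noteq> B \<longrightarrow> A \<inter> B = {}"
      using cls_disj by blast
    show ?thesis using sum.Union_disjoint[OF h1 h2, of F] by (simp only: comp_apply)
  qed
  thus ?thesis unfolding cls_union .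
qed

lemma sum_cls_single:
  assumes "C \<in> index_classes m lam" "k \<in> C" "\<forall>C'\<in>index_classes m lam. k \<notin> C' \<longrightarrow> Y C' k = 0"
  shows "(\<Sum>C'\<in>index_classes m lam. Y C' k) = Y C k"
proof -
  have "(\<Sum>C'\<in>index_classes m lam. Y C' k) = Y C k + (\<Sum>C'\<in>index_classes m lam - {C}. Y C' k)"
    by (rule sum.remove[OF cls_finite assms(1)])
  also have "(\<Sum>C'\<in>index_classes m lam - {C}. Y C' k) = 0"
  proof (rule sum.neutral, rule ballI)
    fix C' assume C': "C' \<in> index_classes m lam - {C}"
    have "k \<notin> C'"
    proof
      assume "k \<in> C'"
      hence "C = C'" using cls_disj[OF assms(1) _ assms(2)] C' by blast
      thus False using C' by blast
    qed
    thus "Y C' k = 0" using assms(3) C' by blast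
  qed
  finally show ?thesis by simp
qed

lemma sum_cls_none:
  assumes "k \<notin> {1..m}" "\<forall>C'\<in>index_classes m lam. k \<notin> C' \<longrightarrow> Y C' k = 0"
  shows "(\<Sum>C'\<in>index_classes m lam. Y C' k) = 0"
proof (rule sum.neutral, rule ballI)
  fix C' assume C': "C' \<in> index_classes m lam"
  have "k \<notin> C'" using cls_sub[OF C'] assms(1) by blast
  thus "Y C' k = 0" using assms(2) C' by blast
qed

lemma regroup:
  fixes p :: "nat \<Rightarrow> ('n::finite, 'a::field) mpoly"
  assumes nz: "\<forall>j\<in>{1..m}. \<forall>i. lam j i \<noteq> 0"
  shows "(\<Sum>k=1..m. sop_act (a k) (pvec m p lam k) x) =
    (\<Sum>C\<in>index_classes m lam. expfun (lam (enum C 1)) x *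
        (\<Sum>k\<in>C. sop_act (chi (\<lambda>i. inverse (lam (enum C 1) i)) (a k)) (polyfun (p k)) x))"
  unfolding sum_cls[of _ m lam]
proof (rule sum.cong[OF refl])
  fix C assume C: "C \<in> index_classes m lam"
  have nzC: "\<forall>i. lam (enum C 1) i \<noteq> 0"
    using nz enum_1[OF cls_fin[OF C] cls_ne[OF C]] cls_sub[OF C] by blast
  show "(\<Sum>k\<in>C. sop_act (a k) (pvec m p lam k) x) =
        expfun (lam (enum C 1)) x * (\<Sum>k\<in>C. sop_act (chi (\<lambda>i. inverse (lam (enum C 1) i)) (a k)) (polyfun (p k)) x)"
    unfolding sum_distrib_left
  proof (rule sum.cong[OF refl])
    fix k assume k: "k \<in> C"
    have "pvec m p lam k = (\<lambda>y. polyfun (p k) y * expfun (lam (enum C 1)) y)"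
      using cls_sub[OF C] k cls_lam[OF C k] unfolding pvec_def by auto
    thus "sop_act (a k) (pvec m p lam k) x =
          expfun (lam (enum C 1)) x * sop_act (chi (\<lambda>i. inverse (lam (enum C 1) i)) (a k)) (polyfun (p k)) x"
      using sop_act_exp[OF nzC] by simp
  qed
qed

lemma image2E: "x \<in> f ` (g ` A) \<Longrightarrow> (\<And>b. b \<in> A \<Longrightarrow> x = f (g b) \<Longrightarrow> P) \<Longrightarrow> P"
  by (erule imageE, erule imageE) simp

theorem theorem6p4:
  fixes p :: "nat \<Rightarrow> ('n::finite, 'a::field) mpoly"
    and lam :: "nat \<Rightarrow> 'n \<Rightarrow> 'a"
    and m :: nat
  assumes "infinite (UNIV :: 'a set)"
    and "\<forall>j\<in>{1..m}. \<forall>i. lam j i \<noteq> 0"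
  shows "ker_kappa m (pvec m p lam) =
           {(\<lambda>k. \<Sum>C\<in>index_classes m lam. x C k) | x.
              \<forall>C\<in>index_classes m lam. x C \<in> phi C ` class_H p lam C} \<and>
         (\<forall>x. (\<forall>C\<in>index_classes m lam. x C \<in> phi C ` class_H p lam C) \<longrightarrow>
              (\<lambda>k. \<Sum>C\<in>index_classes m lam. x C k) = (\<lambda>k. 0) \<longrightarrow>
              (\<forall>C\<in>index_classes m lam. x C = (\<lambda>k. 0))) \<and>
         (\<forall>g R. row_module g m R = ker_kappa m (pvec m p lam) \<longrightarrow>
              is_vmpum_kernel_rep g m R (pvec m p lam))"
proof -
  let ?cls = "index_classes m lam"
  have nzC: "\<forall>i. lam (enum C 1) i \<noteq> 0" if C: "C \<in> ?cls" for C
    using assms(2) enum_1[OF cls_fin[OF C] cls_ne[OF C]] cls_sub[OF C] by blast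
  have Xout: "X C k = 0" if XC: "C \<in> ?cls" "X C \<in> phi C ` class_H p lam C" "k \<notin> C" for X C k
  proof -
    obtain b where "X C = phi C b" using XC(2) by blast
    thus ?thesis using phi_out[OF cls_fin[OF XC(1)] XC(3)] by simp
  qed
  have P1a: "a \<in> {(\<lambda>k. \<Sum>C\<in>?cls. x C k) | x. \<forall>C\<in>?cls. x C \<in> phi C ` class_H p lam C}"
    if a: "a \<in> ker_kappa m (pvec m p lam)" for a
  proof -
    from a have arow: "a \<in> rowvecs m"
      and asum: "(\<lambda>x. \<Sum>j=1..m. sop_act (a j) (pvec m p lam j) x) = (\<lambda>x. 0)"
      unfolding ker_kappa_def by simp_all
    define G where "G C = (\<lambda>x. \<Sum>k\<in>C. sop_act (chi (\<lambda>i. inverse (lam (enum C 1) i)) (a k)) (polyfun (p k)) x)" for C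
    have Gz: "\<forall>x. (\<Sum>C\<in>?cls. expfun (lam (enum C 1)) x * G C x) = 0"
    proof
      fix x
      show "(\<Sum>C\<in>?cls. expfun (lam (enum C 1)) x * G C x) = 0"
        using fun_cong[OF asum, of x] regroup[OF assms(2), where a=a and x=x and p=p] unfolding G_def by simp
    qed
    have GQ: "\<forall>C\<in>?cls. G C \<in> Qset"
      unfolding G_def by (intro ballI Q_sum Q_sop_act Q_polyfun)
    have G0: "G C = (\<lambda>x. 0)" if C: "C \<in> ?cls" for C
      by (rule indep[OF cls_finite GQ _ cls_inj Gz C]) (use nzC in blast)
    define b0 where "b0 C j = (if j \<in> {1..card C} then chi (\<lambda>i. inverse (lam (enum C 1) i)) (a (enum C j)) else 0)" for C j
    define X where "X C = phi C (chi_vec (lam (enum C 1)) (b0 C))" for C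
    have b0ker: "b0 C \<in> ker_kappa (card C) (\<lambda>j. polyfun (p (enum C j)))" if C: "C \<in> ?cls" for C
    proof -
      have "(\<lambda>x. \<Sum>j=1..card C. sop_act (b0 C j) (polyfun (p (enum C j))) x) = (\<lambda>x. 0)"
      proof (rule ext)
        fix x
        have "(\<Sum>j=1..card C. sop_act (b0 C j) (polyfun (p (enum C j))) x) =
              (\<Sum>j\<in>{1..card C}. (\<lambda>k. sop_act (chi (\<lambda>i. inverse (lam (enum C 1) i)) (a k)) (polyfun (p k)) x) (enum C j))"
          by (rule sum.cong) (simp_all add: b0_def)
        also have "\<dots> = G C x"
          unfolding G_def by (rule sum.reindex_bij_betw[OF enum_bij[OF cls_fin[OF C]]])
        also have "\<dots> = 0" using G0[OF C] by simp
        finally show "(\<Sum>j=1..card C. sop_act (b0 C j) (polyfun (p (enum C j))) x) = 0" .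
      qed
      moreover have "b0 C \<in> rowvecs (card C)" unfolding rowvecs_def b0_def by simp
      ultimately show ?thesis unfolding ker_kappa_def by simp
    qed
    have Xval: "X C k = (if k \<in> C then a k else 0)" if C: "C \<in> ?cls" for C k
    proof (cases "k \<in> C")
      case True
      then obtain j where j: "j \<in> {1..card C}" "enum C j = k" using enum_surj[OF cls_fin[OF C]] by blast
      have "X C k = X C (enum C j)" using j(2) by simp
      also have "\<dots> = chi_vec (lam (enum C 1)) (b0 C) j"
        unfolding X_def by (rule phi_enum[OF cls_fin[OF C] j(1)])
      also have "\<dots> = chi (lam (enum C 1)) (chi (\<lambda>i. inverse (lam (enum C 1) i)) (a k))"
        unfolding chi_vec_def b0_def using j by simp
      also have "\<dots> = a k" by (rule chi_chi[OF nzC[OF C]])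
      finally show ?thesis using True by simp
    next
      case False
      thus ?thesis unfolding X_def using phi_out[OF cls_fin[OF C] False] by simp
    qed
    have aeq: "a = (\<lambda>k. \<Sum>C\<in>?cls. X C k)"
    proof (rule ext)
      fix k
      show "a k = (\<Sum>C\<in>?cls. X C k)"
      proof (cases "k \<in> {1..m}")
        case True
        then obtain C0 where C0: "C0 \<in> ?cls" "k \<in> C0" using cls_cover by blast
        have "(\<Sum>C\<in>?cls. X C k) = X C0 k"
          by (rule sum_cls_single[OF C0]) (simp add: Xval)
        thus ?thesis using Xval[OF C0(1)] C0(2) by simp
      next
        case False
        have "(\<Sum>C\<in>?cls. X C k) = 0"
          by (rule sum_cls_none[OF False]) (simp add: Xval)
        moreover have "a k = 0" using arow False unfolding rowvecs_def by blast
        ultimately show ?thesis by simp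
      qed
    qed
    have Xm: "\<forall>C\<in>?cls. X C \<in> phi C ` class_H p lam C"
    proof
      fix C assume C: "C \<in> ?cls"
      show "X C \<in> phi C ` class_H p lam C"
        unfolding X_def class_H_def
        by (rule imageI[where f="phi C"], rule imageI[where f="chi_vec (lam (enum C 1))"], rule b0ker[OF C])
    qed
    show ?thesis by (rule CollectI, rule exI[of _ X], rule conjI[OF aeq Xm])
  qed
  have P1b: "y \<in> ker_kappa m (pvec m p lam)"
    if y: "y \<in> {(\<lambda>k. \<Sum>C\<in>?cls. x C k) | x. \<forall>C\<in>?cls. x C \<in> phi C ` class_H p lam C}" for y
  proof -
    from y have "\<exists>X. y = (\<lambda>k. \<Sum>C\<in>?cls. X C k) \<and> (\<forall>C\<in>?cls. X C \<in> phi C ` class_H p lam C)"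
      by (rule CollectD)
    then obtain X where yX: "y = (\<lambda>k. \<Sum>C\<in>?cls. X C k)"
      and Xm: "\<forall>C\<in>?cls. X C \<in> phi C ` class_H p lam C" by (elim exE conjE)
    have XoutX: "X C k = 0" if "C \<in> ?cls" "k \<notin> C" for C k
      by (rule Xout[where X=X, OF that(1) bspec[OF Xm that(1)] that(2)])
    have ex: "\<forall>C\<in>?cls. \<exists>b. b \<in> ker_kappa (card C) (\<lambda>j. polyfun (p (enum C j))) \<and>
             X C = phi C (chi_vec (lam (enum C 1)) b)"
    proof
      fix C assume C: "C \<in> ?cls"
      have "X C \<in> phi C ` (chi_vec (lam (enum C 1)) ` ker_kappa (card C) (\<lambda>j. polyfun (p (enum C j))))"
        using bspec[OF Xm C] unfolding class_H_def .
      then obtain b where "b \<in> ker_kappa (card C) (\<lambda>j. polyfun (p (enum C j)))"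
        "X C = phi C (chi_vec (lam (enum C 1)) b)" by (rule image2E)
      thus "\<exists>b. b \<in> ker_kappa (card C) (\<lambda>j. polyfun (p (enum C j))) \<and>
             X C = phi C (chi_vec (lam (enum C 1)) b)" by (intro exI conjI)
    qed
    obtain bb where bb: "\<forall>C\<in>?cls. bb C \<in> ker_kappa (card C) (\<lambda>j. polyfun (p (enum C j))) \<and>
             X C = phi C (chi_vec (lam (enum C 1)) (bb C))"
      using bchoice[OF ex] by (elim exE)
    have yk: "y k = X C k" if "C \<in> ?cls" "k \<in> C" for C k
      unfolding yX by (rule sum_cls_single[OF that]) (simp add: XoutX)
    have yrow: "y \<in> rowvecs m"
      unfolding rowvecs_def
    proof (intro CollectI allI impI)
      fix k assume k: "k \<notin> {1..m}"
      show "y k = 0" unfolding yX by (rule sum_cls_none[OF k]) (simp add: XoutX)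
    qed
    have inner: "(\<Sum>k\<in>C. sop_act (chi (\<lambda>i. inverse (lam (enum C 1) i)) (y k)) (polyfun (p k)) x) = 0"
      if C: "C \<in> ?cls" for C x
    proof -
      have "(\<Sum>k\<in>C. sop_act (chi (\<lambda>i. inverse (lam (enum C 1) i)) (y k)) (polyfun (p k)) x) =
            (\<Sum>j\<in>{1..card C}. sop_act (chi (\<lambda>i. inverse (lam (enum C 1) i)) (y (enum C j))) (polyfun (p (enum C j))) x)"
        by (rule sum.reindex_bij_betw[OF enum_bij[OF cls_fin[OF C]], symmetric])
      also have "\<dots> = (\<Sum>j=1..card C. sop_act (bb C j) (polyfun (p (enum C j))) x)"
      proof (rule sum.cong[OF refl])
        fix j assume j: "j \<in> {1..card C}"
        have "y (enum C j) = X C (enum C j)" by (rule yk[OF C enum_in[OF cls_fin[OF C] j]])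
        also have "\<dots> = chi (lam (enum C 1)) (bb C j)"
          using bb C phi_enum[OF cls_fin[OF C] j] by (simp add: chi_vec_def)
        finally have "chi (\<lambda>i. inverse (lam (enum C 1) i)) (y (enum C j)) = bb C j"
          using chi_chi'[OF nzC[OF C]] by simp
        thus "sop_act (chi (\<lambda>i. inverse (lam (enum C 1) i)) (y (enum C j))) (polyfun (p (enum C j))) x =
              sop_act (bb C j) (polyfun (p (enum C j))) x" by simp
      qed
      also have "\<dots> = 0"
        using bb C unfolding ker_kappa_def by (auto dest: fun_cong[of _ _ x])
      finally show ?thesis .
    qed
    have "(\<lambda>x. \<Sum>j=1..m. sop_act (y j) (pvec m p lam j) x) = (\<lambda>x. 0)"
    proof (rule ext)
      fix x
      show "(\<Sum>j=1..m. sop_act (y j) (pvec m p lam j) x) = 0"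
        unfolding regroup[OF assms(2)]
      proof (rule sum.neutral, rule ballI)
        fix C assume C: "C \<in> ?cls"
        show "expfun (lam (enum C 1)) x * (\<Sum>k\<in>C. sop_act (chi (\<lambda>i. inverse (lam (enum C 1) i)) (y k)) (polyfun (p k)) x) = 0"
          unfolding inner[OF C] by simp
      qed
    qed
    thus ?thesis using yrow unfolding ker_kappa_def by simp
  qed
  have part1: "ker_kappa m (pvec m p lam) =
           {(\<lambda>k. \<Sum>C\<in>?cls. x C k) | x. \<forall>C\<in>?cls. x C \<in> phi C ` class_H p lam C}"
    by (rule equalityI[OF subsetI subsetI]) (erule P1a, erule P1b)
  have part2: "\<forall>x. (\<forall>C\<in>?cls. x C \<in> phi C ` class_H p lam C) \<longrightarrow>
              (\<lambda>k. \<Sum>C\<in>?cls. x C k) = (\<lambda>k. 0) \<longrightarrow> (\<forall>C\<in>?cls. x C = (\<lambda>k. 0))"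
  proof (intro allI impI ballI)
    fix X C assume Xm: "\<forall>C\<in>?cls. X C \<in> phi C ` class_H p lam C"
      and Xs: "(\<lambda>k. \<Sum>C\<in>?cls. X C k) = (\<lambda>k. 0)" and C: "C \<in> ?cls"
    show "X C = (\<lambda>k. 0)"
    proof (rule ext)
      fix k
      show "X C k = 0"
      proof (cases "k \<in> C")
        case True
        have "(\<Sum>C'\<in>?cls. X C' k) = X C k"
          by (rule sum_cls_single[OF C True]) (simp add: Xout[where X=X, OF _ bspec[OF Xm]])
        thus ?thesis using fun_cong[OF Xs, of k] by simp
      next
        case False
        thus ?thesis by (rule Xout[where X=X, OF C bspec[OF Xm C]])
      qed
    qed
  qed
  have part3: "is_vmpum_kernel_rep g m R (pvec m p lam)"
    if rm: "row_module g m R = ker_kappa m (pvec m p lam)" for g R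
  proof -
    let ?w = "pvec m p lam"
    have wz: "\<forall>j. j \<notin> {1..m} \<longrightarrow> ?w j = (\<lambda>x. 0)" unfolding pvec_def by simp
    have combo: "sop_act (\<Sum>r\<in>A. sop_mult (c r) (R r j)) f x = (\<Sum>r\<in>A. sop_act (c r) (sop_act (R r j) f) x)"
      for c j f x A by (simp add: sop_act_sum sop_act_mult)
    have wb: "?w \<in> behav g m R"
      unfolding behav_def
    proof (intro CollectI conjI wz ballI)
      fix r assume r: "r \<in> {1..g}"
      define c :: "nat \<Rightarrow> ('n, 'a) sop" where "c r' = (if r' = r then Poly_Mapping.single (\<lambda>_. 0, \<lambda>_. 0) 1 else 0)" for r'
      define v where "v = (\<lambda>j. if j \<in> {1..m} then (\<Sum>r=1..g. sop_mult (c r) (R r j)) else 0)"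
      have "v \<in> row_module g m R" unfolding row_module_def v_def by (rule CollectI, rule exI[of _ c]) simp
      hence "v \<in> ker_kappa m ?w" using rm by simp
      hence vs: "(\<lambda>x. \<Sum>j=1..m. sop_act (v j) (?w j) x) = (\<lambda>x. 0)" unfolding ker_kappa_def by simp
      have vj: "sop_act (v j) f x = sop_act (R r j) f x" if j: "j \<in> {1..m}" for j f x
      proof -
        have vjj: "v j = (\<Sum>r=1..g. sop_mult (c r) (R r j))" using j by (simp add: v_def)
        have "sop_act (v j) f x = (\<Sum>r'=1..g. sop_act (c r') (sop_act (R r' j) f) x)"
          unfolding vjj by (rule combo)
        also have "\<dots> = (\<Sum>r'\<in>{1..g}. if r' = r then sop_act (R r j) f x else 0)"
          by (rule sum.cong) (simp_all add: c_def sop_act_one)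
        also have "\<dots> = sop_act (R r j) f x" using r by simp
        finally show ?thesis .
      qed
      show "(\<lambda>x. \<Sum>j=1..m. sop_act (R r j) (?w j) x) = (\<lambda>x. 0)"
        using vs by (simp add: vj)
    qed
    have minimal: "?w \<in> behav g' m R' \<longrightarrow> behav g m R \<subseteq> behav g' m R'" for g' R'
    proof (intro impI subsetI)
      assume wb': "?w \<in> behav g' m R'"
      fix v assume vb: "v \<in> behav g m R"
      have vz: "\<forall>j. j \<notin> {1..m} \<longrightarrow> v j = (\<lambda>x. 0)"
        and vR: "\<forall>r\<in>{1..g}. (\<lambda>x. \<Sum>j=1..m. sop_act (R r j) (v j) x) = (\<lambda>x. 0)"
        using vb unfolding behav_def by simp_all
      show "v \<in> behav g' m R'"
        unfolding behav_def
      proof (intro CollectI conjI vz ballI)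
        fix r' assume r': "r' \<in> {1..g'}"
        define \<rho> where "\<rho> = (\<lambda>j. if j \<in> {1..m} then R' r' j else 0)"
        have "(\<lambda>x. \<Sum>j=1..m. sop_act (R' r' j) (?w j) x) = (\<lambda>x. 0)"
          using wb' r' unfolding behav_def by simp
        hence "\<rho> \<in> ker_kappa m ?w" unfolding ker_kappa_def rowvecs_def \<rho>_def by simp
        hence "\<rho> \<in> row_module g m R" using rm by simp
        hence "\<exists>c. \<rho> = (\<lambda>j. if j \<in> {1..m} then (\<Sum>r=1..g. sop_mult (c r) (R r j)) else 0) \<and> True"
          unfolding row_module_def by (rule CollectD)
        then obtain c where c: "\<rho> = (\<lambda>j. if j \<in> {1..m} then (\<Sum>r=1..g. sop_mult (c r) (R r j)) else 0)"
          by (elim exE conjE)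
        have Rj: "R' r' j = (\<Sum>r=1..g. sop_mult (c r) (R r j))" if "j \<in> {1..m}" for j
          using fun_cong[OF c, of j] that unfolding \<rho>_def by simp
        show "(\<lambda>x. \<Sum>j=1..m. sop_act (R' r' j) (v j) x) = (\<lambda>x. 0)"
        proof (rule ext)
          fix x
          have "(\<Sum>j=1..m. sop_act (R' r' j) (v j) x) = (\<Sum>j=1..m. \<Sum>r=1..g. sop_act (c r) (sop_act (R r j) (v j)) x)"
            by (rule sum.cong) (simp_all add: Rj combo)
          also have "\<dots> = (\<Sum>r=1..g. \<Sum>j=1..m. sop_act (c r) (sop_act (R r j) (v j)) x)"
            by (rule sum.swap)
          also have "\<dots> = (\<Sum>r=1..g. sop_act (c r) (\<lambda>y. \<Sum>j=1..m. sop_act (R r j) (v j) y) x)"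
            by (simp add: sop_act_fsum)
          also have "\<dots> = 0"
            using vR by (simp add: sop_act_fzero)
          finally show "(\<Sum>j=1..m. sop_act (R' r' j) (v j) x) = 0" .
        qed
      qed
    qed
    show ?thesis unfolding is_vmpum_kernel_rep_def using wb minimal by blast
  qed
  show ?thesis by (intro conjI part1 part2 allI impI part3)
qed

end
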